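(* Let $F_0$ and $F_s$ be distribution functions, $U_r(t):=F_r^{\leftarrow}(1-1/t)=\bigl(1/(1-F_r)\bigr)^{\leftarrow}(t)$ for $t>1$, $r\in\{0,s\}$, and let $c\in\mathbb{R}$, $s\ge0$. Suppose $F_0$ is in the max-domain of attraction of $G_\gamma(x)=\exp\{-(1+\gamma x)^{-1/\gamma}\}$ for some $\gamma\in\mathbb{R}$, with a positive function $a_0$ such that $\lim_{t\to\infty}\frac{U_0(tx)-U_0(t)}{a_0(t)}=\frac{x^\gamma-1}{\gamma}$ for all $x>0$. Let $x^*:=\sup\{x:F_0(x)<1\}$. Then $$\lim_{x\uparrow x^*}\frac{1-F_s(x)}{1-F_0(x)}=e^{cs}\quad\Longleftrightarrow\quad\lim_{t\to\infty}\frac{U_s(t)-U_0(t)}{a_0(t)}=\frac{e^{c\gamma s}-1}{\gamma}.$$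
   Context: $F^{\leftarrow}$ denotes the generalized (left-continuous) inverse. For $\gamma=0$, $\frac{x^\gamma-1}{\gamma}$ means $\log x$, $(1+\gamma x)^{-1/\gamma}$ means $e^{-x}$, and $\frac{e^{c\gamma s}-1}{\gamma}$ means $cs$. *)

theory Defs
  imports "HOL-Analysis.Analysis"
begin

definition distribution_function :: "(real \<Rightarrow> real) \<Rightarrow> bool" where
  "distribution_function F \<longleftrightarrow>
     mono F \<and> (\<forall>x. continuous (at_right x) F) \<and>
     (F \<longlongrightarrow> 0) at_bot \<and> (F \<longlongrightarrow> 1) at_top"

definition gen_inv :: "(real \<Rightarrow> real) \<Rightarrow> real \<Rightarrow> real" where
  "gen_inv F p = Inf {x. p \<le> F x}"

definition tail_quantile :: "(real \<Rightarrow> real) \<Rightarrow> real \<Rightarrow> real" where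
  "tail_quantile F t = gen_inv F (1 - 1 / t)"

definition right_endpoint :: "(real \<Rightarrow> real) \<Rightarrow> ereal" where
  "right_endpoint F = Sup {ereal x | x. F x < 1}"

definition to_right_endpoint :: "(real \<Rightarrow> real) \<Rightarrow> real filter" where
  "to_right_endpoint F =
     (if right_endpoint F = \<infinity> then at_top else at_left (real_of_ereal (right_endpoint F)))"

definition gpd_h :: "real \<Rightarrow> real \<Rightarrow> real" where
  "gpd_h \<gamma> x = (if \<gamma> = 0 then ln x else (x powr \<gamma> - 1) / \<gamma>)"

definition shift_const :: "real \<Rightarrow> real \<Rightarrow> real \<Rightarrow> real" where
  "shift_const \<gamma> c s = (if \<gamma> = 0 then c * s else (exp (c * \<gamma> * s) - 1) / \<gamma>)"

end

theory Submission imports Defs begin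

lemma df_le1:
  assumes "distribution_function F" shows "F x \<le> 1"
proof -
  have m: "mono F" and l: "(F \<longlongrightarrow> 1) at_top" using assms by (auto simp: distribution_function_def)
  have "eventually (\<lambda>y. F x \<le> F y) at_top"
    using eventually_ge_at_top[of x] by eventually_elim (use m in \<open>auto simp: mono_def\<close>)
  from tendsto_lowerbound[OF l this] show ?thesis by simp
qed

lemma gal:
  assumes df: "distribution_function F" and p: "0 < p" "p < 1"
  shows "gen_inv F p \<le> x \<longleftrightarrow> p \<le> F x"
proof -
  have m: "mono F" and rc: "\<And>x. continuous (at_right x) F"
    and l0: "(F \<longlongrightarrow> 0) at_bot" and l1: "(F \<longlongrightarrow> 1) at_top"
    using df by (auto simp: distribution_function_def)
  define S where "S = {x. p \<le> F x}"
  have "eventually (\<lambda>x. F x < p) at_bot" using order_tendstoD(2)[OF l0 p(1)] .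
  then obtain b where b: "\<And>x. x \<le> b \<Longrightarrow> F x < p" by (auto simp: eventually_at_bot_linorder)
  have bdd: "bdd_below S"
    unfolding bdd_below_def S_def using b by (metis mem_Collect_eq not_le order.order_iff_strict)
  have "eventually (\<lambda>x. p < F x) at_top" using order_tendstoD(1)[OF l1 p(2)] .
  then obtain c where c: "\<And>x. x \<ge> c \<Longrightarrow> p < F x" by (auto simp: eventually_at_top_linorder)
  have "c \<in> S" using c[of c] by (simp add: S_def)
  then have ne: "S \<noteq> {}" by auto
  have FQ: "p \<le> F (Inf S)"
  proof -
    have lim: "(F \<longlongrightarrow> F (Inf S)) (at_right (Inf S))"
      using rc[of "Inf S"] by (simp add: continuous_within)
    have "eventually (\<lambda>y. p \<le> F y) (at_right (Inf S))"
      unfolding eventually_at_right_field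
    proof (intro exI[of _ "Inf S + 1"] conjI allI impI)
      fix y assume "Inf S < y"
      then obtain s where "s \<in> S" "s < y" using cInf_less_iff[OF ne bdd] by auto
      then show "p \<le> F y" using m by (auto simp: S_def mono_def intro: order_trans)
    qed simp
    from tendsto_lowerbound[OF lim this] show ?thesis by simp
  qed
  show ?thesis
  proof
    assume "gen_inv F p \<le> x"
    then have "Inf S \<le> x" by (simp add: gen_inv_def S_def)
    then show "p \<le> F x" using FQ m by (auto simp: mono_def intro: order_trans)
  next
    assume "p \<le> F x"
    then have "x \<in> S" by (simp add: S_def)
    then show "gen_inv F p \<le> x" using cInf_lower[OF _ bdd] by (simp add: gen_inv_def S_def)
  qed
qed

lemma tq_gal:
  assumes "distribution_function F" "t > 1"
  shows "tail_quantile F t \<le> x \<longleftrightarrow> 1 - 1/t \<le> F x"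
  unfolding tail_quantile_def using assms by (intro gal) auto

lemma tq_F:
  assumes "distribution_function F" "t > 1"
  shows "1 - 1/t \<le> F (tail_quantile F t)"
  using tq_gal[OF assms, of "tail_quantile F t"] by simp

lemma tq_mono:
  assumes df: "distribution_function F" and "1 < t1" "t1 \<le> t2"
  shows "tail_quantile F t1 \<le> tail_quantile F t2"
proof -
  have "1 - 1/t1 \<le> 1 - 1/t2" using assms by (simp add: frac_le)
  also have "\<dots> \<le> F (tail_quantile F t2)" using tq_F[OF df] assms by simp
  finally show ?thesis using tq_gal[OF df \<open>1 < t1\<close>] by simp
qed

lemma E1: "F y < 1 \<Longrightarrow> ereal y \<le> right_endpoint F"
  unfolding right_endpoint_def by (rule Sup_upper) auto

lemma E2:
  assumes "distribution_function F" "ereal y < right_endpoint F" shows "F y < 1"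
proof -
  from assms(2) obtain z where "z \<in> {ereal x | x. F x < 1}" "ereal y < z"
    unfolding right_endpoint_def using less_Sup_iff by blast
  then obtain w where "F w < 1" "y < w" by auto
  moreover have "mono F" using assms(1) by (simp add: distribution_function_def)
  ultimately show ?thesis by (meson less_imp_le monoD order_le_less_trans)
qed

lemma E3:
  assumes "distribution_function F" shows "right_endpoint F \<noteq> -\<infinity>"
proof -
  have l0: "(F \<longlongrightarrow> 0) at_bot" using assms by (simp add: distribution_function_def)
  have "eventually (\<lambda>x. F x < 1) at_bot" using order_tendstoD(2)[OF l0] by simp
  then obtain x where "F x < 1" by (auto simp: eventually_at_bot_linorder)
  from E1[of F x, OF this] show ?thesis by auto
qed

lemma filt_char:
  assumes "distribution_function F"
  shows "eventually P (to_right_endpoint F) \<longleftrightarrow>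
    (\<exists>y0. ereal y0 < right_endpoint F \<and> (\<forall>y. y0 < y \<and> ereal y < right_endpoint F \<longrightarrow> P y))"
proof (cases "right_endpoint F")
  case (real r)
  then show ?thesis by (simp add: to_right_endpoint_def eventually_at_left_field) blast
next
  case PInf
  then show ?thesis by (simp add: to_right_endpoint_def eventually_at_top_dense)
next
  case MInf
  then show ?thesis using E3[OF assms] by simp
qed

lemma h_mono:
  assumes "0 < x" "x < y" shows "gpd_h g x < gpd_h g y"
proof -
  consider "g = 0" | "g > 0" | "g < 0" by linarith
  then show ?thesis
  proof cases
    case 1 then show ?thesis using assms by (simp add: gpd_h_def)
  next
    case 2
    then have "x powr g < y powr g" using assms by (intro powr_less_mono2) auto
    then show ?thesis using 2 by (simp add: gpd_h_def divide_strict_right_mono)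
  next
    case 3
    then have "y powr g < x powr g" using assms by (intro powr_less_mono2_neg) auto
    then show ?thesis using 3 by (simp add: gpd_h_def divide_strict_right_mono_neg)
  qed
qed

lemma h1: "gpd_h g 1 = 0" by (simp add: gpd_h_def)

lemma h_cont: assumes "0 < x" shows "isCont (gpd_h g) x"
proof (cases "g = 0")
  case True
  then have e: "gpd_h g = ln" by (simp add: gpd_h_def fun_eq_iff)
  show ?thesis unfolding e using assms by (auto intro!: continuous_intros)
next
  case False
  then have e: "gpd_h g = (\<lambda>x. (x powr g - 1) / g)" by (auto simp: gpd_h_def fun_eq_iff)
  show ?thesis unfolding e using assms False by (auto intro!: continuous_intros)
qed

lemma h_shift: "gpd_h g (exp (c * s)) = shift_const g c s"
  by (simp add: gpd_h_def shift_const_def powr_def mult_ac)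

lemma ev_scale:
  assumes "(m::real) > 0" "eventually P at_top" shows "eventually (\<lambda>t. P (t * m)) at_top"
proof -
  from assms(2) obtain N where N: "\<And>s. s \<ge> N \<Longrightarrow> P s" by (auto simp: eventually_at_top_linorder)
  show ?thesis unfolding eventually_at_top_linorder
    by (rule exI[of _ "N / m"]) (use assms(1) N in \<open>auto simp: field_simps\<close>)
qed

theorem mainTheorem4:
  fixes F0 Fs a0 :: "real \<Rightarrow> real" and c s \<gamma> :: real
  assumes "distribution_function F0" and "distribution_function Fs"
    and "s \<ge> 0"
    and "\<forall>t>1. a0 t > 0"
    and "\<forall>x>0. ((\<lambda>t. (tail_quantile F0 (t * x) - tail_quantile F0 t) / a0 t)
                 \<longlongrightarrow> gpd_h \<gamma> x) at_top"
  shows "((\<lambda>x. (1 - Fs x) / (1 - F0 x)) \<longlongrightarrow> exp (c * s)) (to_right_endpoint F0)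
     \<longleftrightarrow> ((\<lambda>t. (tail_quantile Fs t - tail_quantile F0 t) / a0 t)
            \<longlongrightarrow> shift_const \<gamma> c s) at_top"
proof -
  define U where "U = tail_quantile F0"
  define V where "V = tail_quantile Fs"
  define lmb where "lmb = exp (c * s)"
  define h where "h = gpd_h \<gamma>"
  define xs where "xs = right_endpoint F0"
  define FF where "FF = to_right_endpoint F0"
  note df0 = assms(1) and dfs = assms(2)
  have m0: "mono F0" using df0 by (simp add: distribution_function_def)
  have a_pos: "\<And>t. t > 1 \<Longrightarrow> a0 t > 0" using assms(4) by auto
  have conv: "\<And>x. x > 0 \<Longrightarrow> ((\<lambda>t. (U (t*x) - U t) / a0 t) \<longlongrightarrow> h x) at_top"
    using assms(5) by (auto simp: U_def h_def)
  have lmb_pos: "lmb > 0" by (simp add: lmb_def)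
  have hlmb: "h lmb = shift_const \<gamma> c s" by (simp add: h_def lmb_def h_shift)
  have hm: "\<And>x y. 0 < x \<Longrightarrow> x < y \<Longrightarrow> h x < h y" by (simp add: h_def h_mono)
  have Ugal: "\<And>t x. t > 1 \<Longrightarrow> U t \<le> x \<longleftrightarrow> 1 - 1/t \<le> F0 x"
    unfolding U_def using tq_gal[OF df0] by simp
  have Vgal: "\<And>t x. t > 1 \<Longrightarrow> V t \<le> x \<longleftrightarrow> 1 - 1/t \<le> Fs x"
    unfolding V_def using tq_gal[OF dfs] by simp
  have E2': "\<And>y. ereal y < xs \<Longrightarrow> F0 y < 1" unfolding xs_def using E2[OF df0] by simp
  have fc: "\<And>P. eventually P FF \<longleftrightarrow> (\<exists>y0. ereal y0 < xs \<and> (\<forall>y. y0 < y \<and> ereal y < xs \<longrightarrow> P y))"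
    unfolding FF_def xs_def using filt_char[OF df0] by simp

  have NA: "\<And>t. t > 1 \<Longrightarrow> ereal (U t) < xs"
  proof (rule ccontr)
    fix t :: real assume t: "t > 1" and "\<not> ereal (U t) < xs"
    then have zx: "xs \<le> ereal (U t)" by simp
    define z where "z = U t"
    have le: "U r \<le> z" if "r > 1" for r
    proof (rule dense_ge)
      fix w assume "z < w"
      then have "xs < ereal w" using zx order_le_less_trans[of xs "ereal z" "ereal w"] by (simp add: z_def)
      then have "\<not> F0 w < 1" using E1[of F0 w] by (auto simp: xs_def)
      moreover have "1 - 1/r \<le> 1" using that by simp
      ultimately have "1 - 1/r \<le> F0 w" by linarith
      then show "U r \<le> w" using Ugal[OF that] by simp
    qed
    have ge: "z \<le> U r" if "r \<ge> t" for r
      unfolding z_def U_def using tq_mono[OF df0 t that] .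
    have "eventually (\<lambda>r. (U (r*2) - U r) / a0 r = 0) at_top"
      using eventually_ge_at_top[of t]
    proof eventually_elim
      case (elim r)
      then have "U (r*2) = z" "U r = z" using le ge t by (auto intro: order.antisym)
      then show ?case by simp
    qed
    then have "((\<lambda>r. (U (r*2) - U r) / a0 r) \<longlongrightarrow> 0) at_top" by (rule tendsto_eventually)
    from tendsto_unique[OF _ this conv[of 2]] have "h 2 = 0" by simp
    moreover have "h 1 < h 2" using hm[of 1 2] by simp
    ultimately show False by (simp add: h_def h1)
  qed

  have near1: "\<And>e. e > 0 \<Longrightarrow> eventually (\<lambda>y. 1 - e < F0 y \<and> F0 y < 1) FF"
  proof -
    fix e :: real assume e: "e > 0"
    define t0 where "t0 = max 2 (2/e)"
    have t0: "t0 > 1" by (simp add: t0_def)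
    have "2/e \<le> t0" by (simp add: t0_def)
    then have "e * (2/e) \<le> e * t0" using e by (intro mult_left_mono) auto
    then have "2 \<le> e * t0" using e by simp
    then have "1/t0 \<le> e/2" using e t0 by (simp add: field_simps)
    then have b: "1 - e < 1 - 1/t0" using e by simp
    show "eventually (\<lambda>y. 1 - e < F0 y \<and> F0 y < 1) FF"
      unfolding fc
    proof (intro exI[of _ "U t0"] conjI allI impI)
      show "ereal (U t0) < xs" using NA[OF t0] .
      fix y assume y: "U t0 < y \<and> ereal y < xs"
      have "1 - 1/t0 \<le> F0 (U t0)" using Ugal[OF t0, of "U t0"] by simp
      also have "\<dots> \<le> F0 y" using y m0 by (auto simp: mono_def)
      finally show "1 - e < F0 y" using b by simp
    next
      fix y assume y: "U t0 < y \<and> ereal y < xs"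
      show "F0 y < 1" using E2' y by auto
    qed
  qed

  have inv_top: "\<And>m. m > 0 \<Longrightarrow> filterlim (\<lambda>y. 1 / (m * (1 - F0 y))) at_top FF"
  proof -
    fix m :: real assume m: "m > 0"
    show "filterlim (\<lambda>y. 1 / (m * (1 - F0 y))) at_top FF"
      unfolding filterlim_at_top
    proof
      fix Z :: real
      define M where "M = max Z 1"
      have M: "M > 0" "Z \<le> M" by (auto simp: M_def)
      have "eventually (\<lambda>y. 1 - 1/(m*M) < F0 y \<and> F0 y < 1) FF"
        using near1[of "1/(m*M)"] m M by simp
      then show "eventually (\<lambda>y. Z \<le> 1 / (m * (1 - F0 y))) FF"
      proof eventually_elim
        case (elim y)
        define d where "d = 1 - F0 y"
        have d: "0 < d" "d < 1/(m*M)" using elim by (auto simp: d_def)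
        then have "M * (m * d) < 1" using m M by (simp add: field_simps)
        then have "M < 1 / (m*d)" using m d by (simp add: field_simps)
        then show ?case using M by (simp add: d_def)
      qed
    qed
  qed

  have Ugt: "\<And>y0 m. ereal y0 < xs \<Longrightarrow> m > 0 \<Longrightarrow> eventually (\<lambda>t. y0 < U (t*m) \<and> t*m > 1) at_top"
  proof -
    fix y0 m :: real assume y0: "ereal y0 < xs" and m: "m > 0"
    have f: "F0 y0 < 1" using E2'[OF y0] .
    have "eventually (\<lambda>r. y0 < U r \<and> r > 1) at_top"
      using eventually_gt_at_top[of "max 1 (1/(1 - F0 y0))"]
    proof eventually_elim
      case (elim r)
      then have r: "r > 1" "r > 1/(1 - F0 y0)" by auto
      then have "1 < r * (1 - F0 y0)" using f by (simp add: field_simps)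
      then have "1/r < 1 - F0 y0" using r by (simp add: field_simps)
      then have "\<not> (1 - 1/r \<le> F0 y0)" by simp
      then show ?case using Ugal[OF r(1), of y0] r by (simp add: not_le)
    qed
    from ev_scale[OF m this] show "eventually (\<lambda>t. y0 < U (t*m) \<and> t*m > 1) at_top" .
  qed

  have "((\<lambda>x. (1 - Fs x) / (1 - F0 x)) \<longlongrightarrow> lmb) FF
     \<longleftrightarrow> ((\<lambda>t. (V t - U t) / a0 t) \<longlongrightarrow> h lmb) at_top"
  proof
    assume R: "((\<lambda>x. (1 - Fs x) / (1 - F0 x)) \<longlongrightarrow> lmb) FF"
    show "((\<lambda>t. (V t - U t) / a0 t) \<longlongrightarrow> h lmb) at_top"
    proof (rule order_tendstoI)
      fix e assume e: "e < h lmb"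
      have "(h \<longlongrightarrow> h lmb) (at_left lmb)"
        using h_cont[OF lmb_pos] unfolding h_def isCont_def
        by (rule tendsto_within_subset) simp
      from order_tendstoD(1)[OF this e] obtain b where b: "b < lmb" "\<And>y. b < y \<Longrightarrow> y < lmb \<Longrightarrow> e < h y"
        unfolding eventually_at_left_field by auto
      define m where "m = (max b 0 + lmb)/2"
      have m: "0 < m" "m < lmb" "b < m" using b lmb_pos by (auto simp: m_def)
      have em: "e < h m" using b m by simp
      have "eventually (\<lambda>y. m < (1 - Fs y) / (1 - F0 y)) FF" using order_tendstoD(1)[OF R m(2)] .
      then obtain y0 where y0: "ereal y0 < xs" "\<And>y. y0 < y \<Longrightarrow> ereal y < xs \<Longrightarrow> m < (1 - Fs y) / (1 - F0 y)"
        unfolding fc by auto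
      show "eventually (\<lambda>t. e < (V t - U t) / a0 t) at_top"
        using Ugt[OF y0(1) m(1)] order_tendstoD(1)[OF conv[OF m(1)] em] eventually_gt_at_top[of 1]
      proof eventually_elim
        case (elim t)
        have "U (t*m) \<le> V t"
        proof (rule dense_le_bounded[of y0])
          show "y0 < U (t*m)" using elim by simp
          fix w assume w: "y0 < w" "w < U (t*m)"
          have "ereal w < ereal (U (t*m))" using w by simp
          then have wx: "ereal w < xs" using NA[of "t*m"] elim by (blast intro: less_trans)
          have f1: "F0 w < 1" using E2'[OF wx] .
          have r: "m < (1 - Fs w) / (1 - F0 w)" using y0(2)[OF w(1) wx] .
          then have r': "m * (1 - F0 w) < 1 - Fs w" using f1 by (simp add: field_simps)
          have "\<not> (1 - 1/(t*m) \<le> F0 w)" using Ugal[of "t*m" w] elim w(2) by auto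
          then have "1/(t*m) < 1 - F0 w" by simp
          then have "1/t < m * (1 - F0 w)" using m elim by (simp add: field_simps)
          then have "\<not> (1 - 1/t \<le> Fs w)" using r' by simp
          then show "w \<le> V t" using Vgal[of t w] elim by auto
        qed
        then have "(U (t*m) - U t) / a0 t \<le> (V t - U t) / a0 t"
          using a_pos[of t] elim by (intro divide_right_mono) auto
        then show ?case using elim by simp
      qed
    next
      fix e assume e: "h lmb < e"
      have "(h \<longlongrightarrow> h lmb) (at_right lmb)"
        using h_cont[OF lmb_pos] unfolding h_def isCont_def
        by (rule tendsto_within_subset) simp
      from order_tendstoD(2)[OF this e] obtain b where b: "b > lmb" "\<And>y. lmb < y \<Longrightarrow> y < b \<Longrightarrow> h y < e"
        unfolding eventually_at_right_field by auto
      define m where "m = (b + lmb)/2"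
      have m: "0 < m" "lmb < m" "m < b" using b lmb_pos by (auto simp: m_def)
      have em: "h m < e" using b m by simp
      have "eventually (\<lambda>y. (1 - Fs y) / (1 - F0 y) < m) FF" using order_tendstoD(2)[OF R m(2)] .
      then obtain y0 where y0: "ereal y0 < xs" "\<And>y. y0 < y \<Longrightarrow> ereal y < xs \<Longrightarrow> (1 - Fs y) / (1 - F0 y) < m"
        unfolding fc by auto
      show "eventually (\<lambda>t. (V t - U t) / a0 t < e) at_top"
        using Ugt[OF y0(1) m(1)] order_tendstoD(2)[OF conv[OF m(1)] em] eventually_gt_at_top[of 1]
      proof eventually_elim
        case (elim t)
        define w where "w = U (t*m)"
        have wx: "ereal w < xs" using NA[of "t*m"] elim by (simp add: w_def)
        have f1: "F0 w < 1" using E2'[OF wx] .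
        have r: "(1 - Fs w) / (1 - F0 w) < m" using y0(2)[of w] elim wx by (simp add: w_def)
        then have r': "1 - Fs w < m * (1 - F0 w)" using f1 by (simp add: field_simps)
        have "1 - 1/(t*m) \<le> F0 w" using Ugal[of "t*m" w] elim by (simp add: w_def)
        then have "1 - F0 w \<le> 1/(t*m)" by simp
        then have "m * (1 - F0 w) \<le> 1/t" using m elim by (simp add: field_simps)
        then have "1 - 1/t \<le> Fs w" using r' by simp
        then have "V t \<le> U (t*m)" using Vgal[of t w] elim by (simp add: w_def)
        then have "(V t - U t) / a0 t \<le> (U (t*m) - U t) / a0 t"
          using a_pos[of t] elim by (intro divide_right_mono) auto
        then show ?case using elim by simp
      qed
    qed
  next
    assume H: "((\<lambda>t. (V t - U t) / a0 t) \<longlongrightarrow> h lmb) at_top"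
    show "((\<lambda>x. (1 - Fs x) / (1 - F0 x)) \<longlongrightarrow> lmb) FF"
    proof (rule order_tendstoI)
      fix l assume l: "l < lmb"
      define m0 where "m0 = max l 0"
      define m1 where "m1 = (2*m0 + lmb)/3"
      define m where "m = (m0 + 2*lmb)/3"
      have ms: "0 < m1" "m1 < m" "m < lmb" "l < m1" using l lmb_pos by (auto simp: m1_def m_def m0_def)
      have hh: "h m < h lmb" using hm ms by simp
      define mid where "mid = (h m + h lmb)/2"
      have mm: "m > 0" using ms by simp
      have hmid: "h m < mid" "mid < h lmb" using hh by (auto simp: mid_def)
      have e1: "eventually (\<lambda>t. (U (t*m) - U t) / a0 t < mid) at_top"
        using order_tendstoD(2)[OF conv[OF mm] hmid(1)] .
      have e2: "eventually (\<lambda>t. mid < (V t - U t) / a0 t) at_top"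
        using order_tendstoD(1)[OF H hmid(2)] .
      have "eventually (\<lambda>t. t > 1 \<and> U (t*m) < V t) at_top"
        using e1 e2 eventually_gt_at_top[of 1]
      proof eventually_elim
        case (elim t)
        then have "(U (t * m) - U t) / a0 t < (V t - U t) / a0 t" by linarith
        then show ?case using a_pos[of t] elim
          by (simp add: divide_less_cancel)
      qed
      then have "eventually (\<lambda>y. 1/(m1*(1 - F0 y)) > 1 \<and> U (1/(m1*(1 - F0 y))*m) < V (1/(m1*(1 - F0 y)))) FF"
        using inv_top[OF ms(1)] unfolding filterlim_iff by auto
      then show "eventually (\<lambda>y. l < (1 - Fs y) / (1 - F0 y)) FF"
        using near1[of "1/2", OF half_gt_zero[OF zero_less_one]]
      proof eventually_elim
        case (elim y)
        define d where "d = 1 - F0 y"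
        define t where "t = 1/(m1*d)"
        have d: "0 < d" "d < 1/2" using elim by (auto simp: d_def)
        have t: "t > 1" "U (t*m) < V t" using elim by (auto simp: t_def d_def)
        have tm1': "t*m1 = 1/d" using ms d by (simp add: t_def)
        have "t*m1 < t*m" using t ms by (intro mult_strict_left_mono) auto
        moreover have "1/d > 1" using d by (simp add: field_simps)
        ultimately have tm: "t*m > 1" using tm1' by linarith
        have "1/(t*m) < d" using ms d by (simp add: t_def field_simps)
        then have "\<not> (1 - 1/(t*m) \<le> F0 y)" by (simp add: d_def)
        then have "y < U (t*m)" using Ugal[OF tm, of y] by simp
        then have "\<not> V t \<le> y" using t by simp
        then have "\<not> (1 - 1/t \<le> Fs y)" using Vgal[OF t(1)] by simp
        then have "m1 * d < 1 - Fs y" using ms d by (simp add: t_def)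
        then have "m1 < (1 - Fs y) / d" using d by (simp add: field_simps)
        then show ?case using ms by (simp add: d_def)
      qed
    next
      fix u assume u: "lmb < u"
      define m where "m = (lmb + u)/2"
      have ms: "0 < m" "lmb < m" "m < u" using u lmb_pos by (auto simp: m_def)
      have hh: "h lmb < h m" using hm ms lmb_pos by simp
      define mid where "mid = (h m + h lmb)/2"
      have mm: "m > 0" using ms by simp
      have hmid: "mid < h m" "h lmb < mid" using hh by (auto simp: mid_def)
      have e1: "eventually (\<lambda>t. mid < (U (t*m) - U t) / a0 t) at_top"
        using order_tendstoD(1)[OF conv[OF mm] hmid(1)] .
      have e2: "eventually (\<lambda>t. (V t - U t) / a0 t < mid) at_top"
        using order_tendstoD(2)[OF H hmid(2)] .
      have "eventually (\<lambda>t. t > 1 \<and> V t < U (t*m)) at_top"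
        using e1 e2 eventually_gt_at_top[of 1]
      proof eventually_elim
        case (elim t)
        then have "(V t - U t) / a0 t < (U (t * m) - U t) / a0 t" by linarith
        then show ?case using a_pos[of t] elim
          by (simp add: divide_less_cancel)
      qed
      then have "eventually (\<lambda>y. 1/(m*(1 - F0 y)) > 1 \<and> V (1/(m*(1 - F0 y))) < U (1/(m*(1 - F0 y))*m)) FF"
        by (rule eventually_compose_filterlim[OF _ inv_top[OF ms(1)]])
      then show "eventually (\<lambda>y. (1 - Fs y) / (1 - F0 y) < u) FF"
        using near1[of "1/2", OF half_gt_zero[OF zero_less_one]]
      proof eventually_elim
        case (elim y)
        define d where "d = 1 - F0 y"
        define t where "t = 1/(m*d)"
        have d: "0 < d" "d < 1/2" using elim by (auto simp: d_def)
        have t: "t > 1" "V t < U (t*m)" using elim by (auto simp: t_def d_def)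
        have tm: "t*m = 1/d" using ms d by (simp add: t_def)
        have tm1: "t*m > 1" using tm d by simp
        have "1 - 1/(t*m) \<le> F0 y" using tm by (simp add: d_def)
        then have "U (t*m) \<le> y" using Ugal[OF tm1, of y] by simp
        then have "V t \<le> y" using t by simp
        then have "1 - 1/t \<le> Fs y" using Vgal[OF t(1)] by simp
        then have "1 - Fs y \<le> m * d" using ms d by (simp add: t_def)
        then have "(1 - Fs y) / d \<le> m" using d by (simp add: field_simps)
        then show ?case using ms by (simp add: d_def)
      qed
    qed
  qed
  moreover have hl2: "h (exp (c * s)) = shift_const \<gamma> c s" using hlmb by (simp add: lmb_def)
  ultimately show ?thesis unfolding U_def V_def lmb_def FF_def hl2 by simp
qed

end
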